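(* Let $(M,\bullet)$ be a monoid with unit $e$. Then ${\sf T}M$, equipped with the partial compositions $\circ_i$ and the right actions of the symmetric groups described in the context, is a symmetric set-operad (with unit $(e)\in{\sf T}M(1)$). Moreover, the assignment $M\mapsto {\sf T}M$, $\theta\mapsto{\sf T}\theta$ is a functor from the category of monoids (with monoid morphisms) to the category of set-operads (with set-operad morphisms). Furthermore, ${\sf T}$ preserves injections and surjections: if $\theta:M\to N$ is an injective (resp. surjective) monoid morphism, then ${\sf T}\theta$ is injective (resp. surjective).
   Context: For a monoid $(M,\bullet)$, let ${\sf T}M:=\biguplus_{n\geq 1}{\sf T}M(n)$ where ${\sf T}M(n):=M^n$ is the set of words $(x_1,\dots,x_n)$ of length $n$ over the alphabet $M$ (elements of arity $n$). For $x\in{\sf T}M(n)$, $y\in{\sf T}M(m)$ and $1\leq i\leq n$, define $x\circ_i y:=(x_1,\dots,x_{i-1},x_i\bullet y_1,\dots,x_i\bullet y_m,x_{i+1},\dots,x_n)\in{\sf T}M(n+m-1)$. For $x\in{\sf T}M(n)$ and $\sigma\in\mathfrak{S}_n$, define $x\cdot\sigma:=(x_{\sigma(1)},\dots,x_{\sigma(n)})$. For a monoid morphism $\theta:M\to N$, define ${\sf T}\theta:{\sf T}M\to{\sf T}N$ by ${\sf T}\theta(x_1,\dots,x_n):=(\theta(x_1),\dots,\theta(x_n))$. *)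

theory Defs
  imports "HOL-Combinatorics.Permutations"
begin

text \<open>Partial composition of permutations: for sigma in S_n, tau in S_m and 1 \<le> i \<le> n,
 the permutation of {1..n+m-1} obtained by substituting tau into the i-th letter of sigma
 (identity outside {1..n+m-1}).\<close>
definition perm_comp :: "nat \<Rightarrow> nat \<Rightarrow> (nat \<Rightarrow> nat) \<Rightarrow> nat \<Rightarrow> (nat \<Rightarrow> nat) \<Rightarrow> nat \<Rightarrow> nat" where
  "perm_comp n m \<sigma> i \<tau> p =
     (let sh = (\<lambda>q. if q < \<sigma> i then q else q + m - 1) in
      if p < 1 then p
      else if p < i then sh (\<sigma> p)
      else if p < i + m then \<sigma> i + \<tau> (p - i + 1) - 1
      else if p \<le> n + m - 1 then sh (\<sigma> (p - m + 1))
      else p)"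

definition sym_set_operad ::
  "(nat \<Rightarrow> 'x set) \<Rightarrow> ('x \<Rightarrow> nat \<Rightarrow> 'x \<Rightarrow> 'x) \<Rightarrow> ('x \<Rightarrow> (nat \<Rightarrow> nat) \<Rightarrow> 'x) \<Rightarrow> 'x \<Rightarrow> bool" where
  "sym_set_operad Op pc act u \<longleftrightarrow>
     \<comment> \<open>graded set, arities \<ge> 1\<close>
     Op 0 = {} \<and>
     (\<forall>n m. n \<noteq> m \<longrightarrow> Op n \<inter> Op m = {}) \<and>
     \<comment> \<open>partial compositions are well-typed\<close>
     (\<forall>n m x y i. x \<in> Op n \<longrightarrow> y \<in> Op m \<longrightarrow> 1 \<le> i \<longrightarrow> i \<le> n \<longrightarrow> pc x i y \<in> Op (n + m - 1)) \<and>
     \<comment> \<open>unit\<close>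
     u \<in> Op 1 \<and>
     (\<forall>n x. x \<in> Op n \<longrightarrow> pc u 1 x = x) \<and>
     (\<forall>n x i. x \<in> Op n \<longrightarrow> 1 \<le> i \<longrightarrow> i \<le> n \<longrightarrow> pc x i u = x) \<and>
     \<comment> \<open>sequential associativity\<close>
     (\<forall>n m k x y z i j. x \<in> Op n \<longrightarrow> y \<in> Op m \<longrightarrow> z \<in> Op k \<longrightarrow>
        1 \<le> i \<longrightarrow> i \<le> n \<longrightarrow> 1 \<le> j \<longrightarrow> j \<le> m \<longrightarrow>
        pc (pc x i y) (i + j - 1) z = pc x i (pc y j z)) \<and>
     \<comment> \<open>parallel associativity\<close>
     (\<forall>n m k x y z i j. x \<in> Op n \<longrightarrow> y \<in> Op m \<longrightarrow> z \<in> Op k \<longrightarrow>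
        1 \<le> i \<longrightarrow> i < j \<longrightarrow> j \<le> n \<longrightarrow>
        pc (pc x i y) (j + m - 1) z = pc (pc x j z) i y) \<and>
     \<comment> \<open>right actions of the symmetric groups\<close>
     (\<forall>n x \<sigma>. x \<in> Op n \<longrightarrow> \<sigma> permutes {1..n} \<longrightarrow> act x \<sigma> \<in> Op n) \<and>
     (\<forall>n x. x \<in> Op n \<longrightarrow> act x id = x) \<and>
     (\<forall>n x \<sigma> \<tau>. x \<in> Op n \<longrightarrow> \<sigma> permutes {1..n} \<longrightarrow> \<tau> permutes {1..n} \<longrightarrow>
        act (act x \<sigma>) \<tau> = act x (\<sigma> \<circ> \<tau>)) \<and>
     \<comment> \<open>equivariance of partial compositions\<close>
     (\<forall>n m x y \<sigma> \<tau> i. x \<in> Op n \<longrightarrow> y \<in> Op m \<longrightarrow> \<sigma> permutes {1..n} \<longrightarrow> \<tau> permutes {1..m} \<longrightarrow>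
        1 \<le> i \<longrightarrow> i \<le> n \<longrightarrow>
        pc (act x \<sigma>) i (act y \<tau>) = act (pc x (\<sigma> i) y) (perm_comp n m \<sigma> i \<tau>))"

definition operad_morphism ::
  "(nat \<Rightarrow> 'x set) \<Rightarrow> ('x \<Rightarrow> nat \<Rightarrow> 'x \<Rightarrow> 'x) \<Rightarrow> ('x \<Rightarrow> (nat \<Rightarrow> nat) \<Rightarrow> 'x) \<Rightarrow> 'x \<Rightarrow>
   (nat \<Rightarrow> 'y set) \<Rightarrow> ('y \<Rightarrow> nat \<Rightarrow> 'y \<Rightarrow> 'y) \<Rightarrow> ('y \<Rightarrow> (nat \<Rightarrow> nat) \<Rightarrow> 'y) \<Rightarrow> 'y \<Rightarrow>
   ('x \<Rightarrow> 'y) \<Rightarrow> bool" where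
  "operad_morphism Op pc act u Op' pc' act' u' f \<longleftrightarrow>
     (\<forall>n x. x \<in> Op n \<longrightarrow> f x \<in> Op' n) \<and>
     (\<forall>n m x y i. x \<in> Op n \<longrightarrow> y \<in> Op m \<longrightarrow> 1 \<le> i \<longrightarrow> i \<le> n \<longrightarrow>
        f (pc x i y) = pc' (f x) i (f y)) \<and>
     (\<forall>n x \<sigma>. x \<in> Op n \<longrightarrow> \<sigma> permutes {1..n} \<longrightarrow> f (act x \<sigma>) = act' (f x) \<sigma>) \<and>
     f u = u'"

definition monoid_hom :: "('a::monoid_mult \<Rightarrow> 'b::monoid_mult) \<Rightarrow> bool" where
  "monoid_hom \<theta> \<longleftrightarrow> \<theta> 1 = 1 \<and> (\<forall>a b. \<theta> (a * b) = \<theta> a * \<theta> b)"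

text \<open>Words (x_1,...,x_n) are lists; x_i is xs ! (i-1).\<close>
definition TM :: "nat \<Rightarrow> 'a::monoid_mult list set" where
  "TM n = {xs. 1 \<le> n \<and> length xs = n}"

definition T_comp :: "'a::monoid_mult list \<Rightarrow> nat \<Rightarrow> 'a list \<Rightarrow> 'a list" where
  "T_comp x i y = take (i - 1) x @ map (\<lambda>b. (x ! (i - 1)) * b) y @ drop i x"

definition T_act :: "'a::monoid_mult list \<Rightarrow> (nat \<Rightarrow> nat) \<Rightarrow> 'a list" where
  "T_act x \<sigma> = map (\<lambda>p. x ! (\<sigma> p - 1)) [1..<length x + 1]"

definition T_unit :: "'a::monoid_mult list" where
  "T_unit = [1]"

definition T_map :: "('a::monoid_mult \<Rightarrow> 'b::monoid_mult) \<Rightarrow> 'a list \<Rightarrow> 'b list" where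
  "T_map \<theta> xs = map \<theta> xs"

end

theory Submission
  imports Defs
begin

lemma comp_split: "T_comp (p @ c # s) (Suc (length p)) z = p @ map ((*) c) z @ s"
  unfolding T_comp_def by simp

lemma split_at: "1 \<le> i \<Longrightarrow> i \<le> length x \<Longrightarrow> \<exists>p c s. x = p @ c # s \<and> length p = i - 1"
  by (metis Suc_le_eq Suc_pred' id_take_nth_drop less_Suc_eq_le length_take min_def not_le zero_less_iff_neq_zero One_nat_def)

lemma seq_assoc:
  fixes x y z :: "'a::monoid_mult list"
  assumes "1 \<le> i" "i \<le> length x" "1 \<le> j" "j \<le> length y"
  shows "T_comp (T_comp x i y) (i + j - 1) z = T_comp x i (T_comp y j z)"
proof -
  obtain p c s where x: "x = p @ c # s" "length p = i - 1" using split_at assms by blast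
  obtain p' c' s' where y: "y = p' @ c' # s'" "length p' = j - 1" using split_at assms by blast
  have i: "i = Suc (length p)" "j = Suc (length p')" using x y assms by auto
  have "T_comp x i y = (p @ map ((*) c) p') @ (c * c') # (map ((*) c) s' @ s)"
    using x y i by (simp add: comp_split)
  moreover have "i + j - 1 = Suc (length (p @ map ((*) c) p'))" using i by simp
  ultimately have "T_comp (T_comp x i y) (i + j - 1) z = (p @ map ((*) c) p') @ map ((*) (c*c')) z @ (map ((*) c) s' @ s)"
    by (metis comp_split)
  moreover have "T_comp x i (T_comp y j z) = p @ map ((*) c) (p' @ map ((*) c') z @ s') @ s"
    using x y i comp_split by metis
  ultimately show ?thesis by (simp add: mult.assoc)
qed

lemma par_assoc:
  fixes x y z :: "'a::monoid_mult list"
  assumes "1 \<le> i" "i < j" "j \<le> length x"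
  shows "T_comp (T_comp x i y) (j + length y - 1) z = T_comp (T_comp x j z) i y"
proof -
  obtain p c s where x: "x = p @ c # s" "length p = i - 1" using split_at[of i x] assms by auto
  have "j - i \<le> length s" using x assms by auto
  moreover have "1 \<le> j - i" using assms by auto
  ultimately obtain q d t where s: "s = q @ d # t" "length q = j - i - 1" using split_at[of "j - i" s] by blast
  have i: "i = Suc (length p)" "j = Suc (length (p @ c # q))" using x s assms by auto
  have "T_comp x i y = (p @ map ((*) c) y @ q) @ d # t" using x s i by (simp add: comp_split)
  moreover have "j + length y - 1 = Suc (length (p @ map ((*) c) y @ q))" using i by simp
  ultimately have 1: "T_comp (T_comp x i y) (j + length y - 1) z = (p @ map ((*) c) y @ q) @ map ((*) d) z @ t"
    by (metis comp_split)
  have "T_comp x j z = p @ c # (q @ map ((*) d) z @ t)" using x s i comp_split by (metis append.assoc append_Cons)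
  hence "T_comp (T_comp x j z) i y = p @ map ((*) c) y @ (q @ map ((*) d) z @ t)" using i comp_split by metis
  with 1 show ?thesis by simp
qed
lemma nth_comp:
  assumes "1 \<le> i" "i \<le> length x" "q < length x + length y - 1"
  shows "T_comp x i y ! q = (if q < i - 1 then x ! q else if q < i - 1 + length y
     then x ! (i - 1) * y ! (q - (i - 1)) else x ! (q + 1 - length y))"
  using assms unfolding T_comp_def
  by (auto simp: nth_append min_def)

lemma len_comp: "1 \<le> i \<Longrightarrow> i \<le> length x \<Longrightarrow> length (T_comp x i y) = length x + length y - 1"
  unfolding T_comp_def by auto

lemma len_act: "length (T_act x \<sigma>) = length x"
  unfolding T_act_def by (simp del: upt_Suc)

lemma nth_act: "q < length x \<Longrightarrow> T_act x \<sigma> ! q = x ! (\<sigma> (Suc q) - 1)"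
  unfolding T_act_def by (simp del: upt_Suc)

lemma perm_range: "\<sigma> permutes {1..n} \<Longrightarrow> 1 \<le> p \<Longrightarrow> p \<le> n \<Longrightarrow> 1 \<le> \<sigma> p \<and> \<sigma> p \<le> n"
  using permutes_in_image[of \<sigma> "{1..n}" p] by auto

lemma outside:
  fixes x y :: "'a::monoid_mult list"
  assumes "1 \<le> s" "s \<le> length x" "1 \<le> k" "k \<le> length x" "k \<noteq> s" "1 \<le> length y"
  shows "T_comp x s y ! ((if k < s then k else k + length y - 1) - 1) = x ! (k - 1)"
proof (cases "k < s")
  case True
  then show ?thesis using assms nth_comp[of s x "k - 1" y] by auto
next
  case False
  have "s - 1 + length y \<le> k + length y - 1 - 1" "k + length y - 1 - 1 + 1 - length y = k - 1"
    "k + length y - 1 - 1 < length x + length y - 1" using False assms by linarith+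
  then show ?thesis using False assms nth_comp[of s x "k + length y - 1 - 1" y] by (simp del: One_nat_def)
qed

lemma equiv:
  fixes x y :: "'a::monoid_mult list"
  assumes lx: "length x = n" and ly: "length y = m" and m1: "1 \<le> m"
    and sg: "\<sigma> permutes {1..n}" and tg: "\<tau> permutes {1..m}" and i: "1 \<le> i" "i \<le> n"
  shows "T_comp (T_act x \<sigma>) i (T_act y \<tau>) = T_act (T_comp x (\<sigma> i) y) (perm_comp n m \<sigma> i \<tau>)"
proof (rule nth_equalityI)
  have si: "1 \<le> \<sigma> i" "\<sigma> i \<le> n" using perm_range[OF sg i] by auto
  show "length (T_comp (T_act x \<sigma>) i (T_act y \<tau>)) = length (T_act (T_comp x (\<sigma> i) y) (perm_comp n m \<sigma> i \<tau>))"
    using assms si by (simp add: len_comp len_act)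
  fix q assume "q < length (T_comp (T_act x \<sigma>) i (T_act y \<tau>))"
  hence q: "q < n + m - 1" using assms by (simp add: len_comp len_act)
  have L: "T_comp (T_act x \<sigma>) i (T_act y \<tau>) ! q = (if q < i - 1 then x ! (\<sigma> (Suc q) - 1) else if q < i - 1 + m
     then x ! (\<sigma> i - 1) * y ! (\<tau> (Suc (q - (i - 1))) - 1) else x ! (\<sigma> (q + Suc (Suc 0) - m) - 1))"
  proof -
    have "\<not> q < i - 1 + m \<Longrightarrow> Suc (q + 1 - m) = q + Suc (Suc 0) - m" using i by auto
    then show ?thesis using nth_comp[of i "T_act x \<sigma>" q "T_act y \<tau>"] assms q
      by (auto simp: len_act nth_act)
  qed
  have R: "T_act (T_comp x (\<sigma> i) y) (perm_comp n m \<sigma> i \<tau>) ! q =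
     T_comp x (\<sigma> i) y ! (perm_comp n m \<sigma> i \<tau> (Suc q) - 1)"
    using nth_act[of q "T_comp x (\<sigma> i) y"] q assms si by (simp add: len_comp)
  have inj: "\<And>p. \<sigma> p = \<sigma> i \<Longrightarrow> p = i" using permutes_inj[OF sg] by (meson injD)
  consider (a) "q < i - 1" | (b) "i - 1 \<le> q" "q < i - 1 + m" | (c) "i - 1 + m \<le> q" by linarith
  then show "T_comp (T_act x \<sigma>) i (T_act y \<tau>) ! q = T_act (T_comp x (\<sigma> i) y) (perm_comp n m \<sigma> i \<tau>) ! q"
  proof cases
    case a
    have sp: "1 \<le> \<sigma> (Suc q)" "\<sigma> (Suc q) \<le> n" using perm_range[OF sg, of "Suc q"] a i by auto
    have ne: "\<sigma> (Suc q) \<noteq> \<sigma> i" using inj a by fastforce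
    have pc: "perm_comp n m \<sigma> i \<tau> (Suc q) = (if \<sigma> (Suc q) < \<sigma> i then \<sigma> (Suc q) else \<sigma> (Suc q) + m - 1)"
    proof -
      have "Suc q < i" using a by linarith
      then show ?thesis unfolding perm_comp_def by (simp add: Let_def)
    qed
    have "T_comp x (\<sigma> i) y ! (perm_comp n m \<sigma> i \<tau> (Suc q) - 1) = x ! (\<sigma> (Suc q) - 1)"
      unfolding pc by (rule outside[of "\<sigma> i" x "\<sigma> (Suc q)" y, unfolded ly]) (use sp si ne assms in auto)
    then show ?thesis using L R a by simp
  next
    case b
    have tp: "1 \<le> \<tau> (Suc (q - (i - 1)))" "\<tau> (Suc (q - (i - 1))) \<le> m"
      using perm_range[OF tg, of "Suc (q - (i - 1))"] b by auto
    have pc: "perm_comp n m \<sigma> i \<tau> (Suc q) = \<sigma> i + \<tau> (Suc (q - (i - 1))) - 1"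
    proof -
      have "\<not> Suc q < i" "Suc q < i + m" "1 \<le> Suc q" "Suc q - i + 1 = Suc (q - (i - 1))" using b i by linarith+
      then show ?thesis unfolding perm_comp_def by (simp add: Let_def del: One_nat_def)
    qed
    show ?thesis using L R pc b tp si nth_comp[of "\<sigma> i" x "\<sigma> i + \<tau> (Suc (q - (i - 1))) - Suc (Suc 0)" y] assms
      by auto
  next
    case c
    have sp: "1 \<le> \<sigma> (q + Suc (Suc 0) - m)" "\<sigma> (q + Suc (Suc 0) - m) \<le> n" using perm_range[OF sg, of "q + Suc (Suc 0) - m"] c q i by auto
    have ne: "\<sigma> (q + Suc (Suc 0) - m) \<noteq> \<sigma> i" using inj c by fastforce
    have pc: "perm_comp n m \<sigma> i \<tau> (Suc q) = (if \<sigma> (q + Suc (Suc 0) - m) < \<sigma> i then \<sigma> (q + Suc (Suc 0) - m) else \<sigma> (q + Suc (Suc 0) - m) + m - 1)"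
    proof -
      have "\<not> Suc q < i" "\<not> Suc q < i + m" "1 \<le> Suc q" "Suc q \<le> n + m - 1" "Suc q - m + 1 = q + Suc (Suc 0) - m"
        using c q i m1 by linarith+
      then show ?thesis unfolding perm_comp_def by (simp add: Let_def del: One_nat_def)
    qed
    have "T_comp x (\<sigma> i) y ! (perm_comp n m \<sigma> i \<tau> (Suc q) - 1) = x ! (\<sigma> (q + Suc (Suc 0) - m) - 1)"
      unfolding pc by (rule outside[of "\<sigma> i" x "\<sigma> (q + Suc (Suc 0) - m)" y, unfolded ly]) (use sp si ne assms in auto)
    then show ?thesis using L R c by simp
  qed
qed

lemma TM_iff: "x \<in> TM n \<longleftrightarrow> 1 \<le> n \<and> length x = n"
  unfolding TM_def by simp

lemma act_id: "T_act x id = x"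
  by (rule nth_equalityI) (auto simp: len_act nth_act)

lemma act_comp:
  assumes "length x = n" "\<sigma> permutes {1..n}" "\<tau> permutes {1..n}"
  shows "T_act (T_act x \<sigma>) \<tau> = T_act x (\<sigma> \<circ> \<tau>)"
proof (rule nth_equalityI)
  show "length (T_act (T_act x \<sigma>) \<tau>) = length (T_act x (\<sigma> \<circ> \<tau>))" by (simp add: len_act)
  fix q assume "q < length (T_act (T_act x \<sigma>) \<tau>)"
  hence q: "q < n" using assms by (simp add: len_act)
  have r: "1 \<le> \<tau> (Suc q) \<and> \<tau> (Suc q) \<le> n" using perm_range[OF assms(3), of "Suc q"] q by auto
  hence "\<tau> (Suc q) - 1 < n" "Suc (\<tau> (Suc q) - 1) = \<tau> (Suc q)" by auto
  then show "T_act (T_act x \<sigma>) \<tau> ! q = T_act x (\<sigma> \<circ> \<tau>) ! q"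
    using q assms nth_act[of "\<tau> (Suc q) - 1" x \<sigma>] by (simp add: nth_act len_act)
qed

lemma map_comp_T:
  assumes "monoid_hom \<theta>" "1 \<le> i" "i \<le> length x"
  shows "T_map \<theta> (T_comp x i y) = T_comp (T_map \<theta> x) i (T_map \<theta> y)"
  using assms unfolding T_map_def T_comp_def monoid_hom_def
  by (simp add: take_map drop_map)

lemma map_act_T:
  assumes "length x = n" "\<sigma> permutes {1..n}"
  shows "T_map \<theta> (T_act x \<sigma>) = T_act (T_map \<theta> x) \<sigma>"
proof (rule nth_equalityI)
  show "length (T_map \<theta> (T_act x \<sigma>)) = length (T_act (T_map \<theta> x) \<sigma>)"
    by (simp add: T_map_def len_act)
  fix q assume "q < length (T_map \<theta> (T_act x \<sigma>))"
  hence q: "q < n" using assms by (simp add: len_act T_map_def)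
  have "1 \<le> \<sigma> (Suc q) \<and> \<sigma> (Suc q) \<le> n" using perm_range[OF assms(2), of "Suc q"] q by auto
  hence "\<sigma> (Suc q) - 1 < n" by auto
  then show "T_map \<theta> (T_act x \<sigma>) ! q = T_act (T_map \<theta> x) \<sigma> ! q"
    using q assms by (simp add: nth_act len_act T_map_def)
qed

theorem mainTheorem1:
  fixes \<theta> :: "'a::monoid_mult \<Rightarrow> 'b::monoid_mult"
    and \<phi> :: "'c::monoid_mult \<Rightarrow> 'a"
  shows "sym_set_operad (TM :: nat \<Rightarrow> 'a list set) T_comp T_act T_unit
    \<and> (monoid_hom \<theta> \<longrightarrow>
         operad_morphism (TM :: nat \<Rightarrow> 'a list set) T_comp T_act T_unit
                         (TM :: nat \<Rightarrow> 'b list set) T_comp T_act T_unit (T_map \<theta>))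
    \<and> (\<forall>x \<in> (\<Union>n. TM n). T_map (id :: 'a \<Rightarrow> 'a) x = x)
    \<and> (monoid_hom \<theta> \<longrightarrow> monoid_hom \<phi> \<longrightarrow>
         (\<forall>x \<in> (\<Union>n. TM n). T_map (\<theta> \<circ> \<phi>) x = T_map \<theta> (T_map \<phi> x)))
    \<and> (monoid_hom \<theta> \<longrightarrow> inj \<theta> \<longrightarrow> inj_on (T_map \<theta>) (\<Union>n. TM n))
    \<and> (monoid_hom \<theta> \<longrightarrow> surj \<theta> \<longrightarrow> T_map \<theta> ` (\<Union>n. TM n) = (\<Union>n. TM n))"
proof (intro conjI impI)
  show "sym_set_operad (TM :: nat \<Rightarrow> 'a list set) T_comp T_act T_unit"
    unfolding sym_set_operad_def
  proof (intro conjI allI impI)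
    show "(TM 0 :: 'a list set) = {}" by (simp add: TM_def)
  next
    fix n m :: nat assume "n \<noteq> m" then show "(TM n :: 'a list set) \<inter> TM m = {}" by (auto simp: TM_def)
  next
    fix n m i :: nat and x y :: "'a list"
    assume "x \<in> TM n" "y \<in> TM m" "1 \<le> i" "i \<le> n"
    then show "T_comp x i y \<in> TM (n + m - 1)" by (auto simp: TM_iff len_comp)
  next
    show "(T_unit :: 'a list) \<in> TM 1" by (simp add: TM_def T_unit_def)
  next
    fix n and x :: "'a list" assume "x \<in> TM n"
    then show "T_comp T_unit 1 x = x" by (simp add: T_comp_def T_unit_def)
  next
    fix n i and x :: "'a list" assume "x \<in> TM n" "1 \<le> i" "i \<le> n"
    then show "T_comp x i T_unit = x"
      using id_take_nth_drop[of "i - 1" x] by (simp add: T_comp_def T_unit_def TM_iff)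
  next
    fix n m k i j and x y z :: "'a list"
    assume "x \<in> TM n" "y \<in> TM m" "z \<in> TM k" "1 \<le> i" "i \<le> n" "1 \<le> j" "j \<le> m"
    then show "T_comp (T_comp x i y) (i + j - 1) z = T_comp x i (T_comp y j z)"
      by (intro seq_assoc) (auto simp: TM_iff)
  next
    fix n m k i j and x y z :: "'a list"
    assume "x \<in> TM n" "y \<in> TM m" "z \<in> TM k" "1 \<le> i" "i < j" "j \<le> n"
    then show "T_comp (T_comp x i y) (j + m - 1) z = T_comp (T_comp x j z) i y"
      using par_assoc[of i j x y z] by (auto simp: TM_iff)
  next
    fix n \<sigma> and x :: "'a list" assume "x \<in> TM n" "\<sigma> permutes {1..n}"
    then show "T_act x \<sigma> \<in> TM n" by (simp add: TM_iff len_act)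
  next
    fix n and x :: "'a list" assume "x \<in> TM n"
    show "T_act x id = x" by (rule act_id)
  next
    fix n \<sigma> \<tau> and x :: "'a list" assume "x \<in> TM n" "\<sigma> permutes {1..n}" "\<tau> permutes {1..n}"
    then show "T_act (T_act x \<sigma>) \<tau> = T_act x (\<sigma> \<circ> \<tau>)" using act_comp by (auto simp: TM_iff)
  next
    fix n m \<sigma> \<tau> i and x y :: "'a list"
    assume "x \<in> TM n" "y \<in> TM m" "\<sigma> permutes {1..n}" "\<tau> permutes {1..m}" "1 \<le> i" "i \<le> n"
    then show "T_comp (T_act x \<sigma>) i (T_act y \<tau>) = T_act (T_comp x (\<sigma> i) y) (perm_comp n m \<sigma> i \<tau>)"
      using equiv[of x n y m \<sigma> \<tau> i] by (auto simp: TM_iff)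
  qed
next
  assume h: "monoid_hom \<theta>"
  show "operad_morphism (TM :: nat \<Rightarrow> 'a list set) T_comp T_act T_unit
                         (TM :: nat \<Rightarrow> 'b list set) T_comp T_act T_unit (T_map \<theta>)"
    unfolding operad_morphism_def
  proof (intro conjI allI impI)
    fix n and x :: "'a list" assume "x \<in> TM n" then show "T_map \<theta> x \<in> TM n"
      by (simp add: TM_iff T_map_def)
  next
    fix n m i and x y :: "'a list" assume "x \<in> TM n" "y \<in> TM m" "1 \<le> i" "i \<le> n"
    then show "T_map \<theta> (T_comp x i y) = T_comp (T_map \<theta> x) i (T_map \<theta> y)"
      using map_comp_T[OF h] by (simp add: TM_iff)
  next
    fix n \<sigma> and x :: "'a list" assume "x \<in> TM n" "\<sigma> permutes {1..n}"
    then show "T_map \<theta> (T_act x \<sigma>) = T_act (T_map \<theta> x) \<sigma>"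
      using map_act_T[of x n \<sigma> \<theta>] by (simp add: TM_iff)
  next
    show "T_map \<theta> T_unit = T_unit" using h by (simp add: T_map_def T_unit_def monoid_hom_def)
  qed
next
  show "\<forall>x \<in> (\<Union>n. TM n). T_map (id :: 'a \<Rightarrow> 'a) x = x" by (simp add: T_map_def)
next
  show "\<forall>x \<in> (\<Union>n. TM n). T_map (\<theta> \<circ> \<phi>) x = T_map \<theta> (T_map \<phi> x)" by (simp add: T_map_def)
next
  assume "inj \<theta>"
  then show "inj_on (T_map \<theta>) (\<Union>n. TM n)"
    unfolding T_map_def by (meson inj_mapI inj_on_subset subset_UNIV)
next
  assume s: "surj \<theta>"
  show "T_map \<theta> ` (\<Union>n. TM n) = (\<Union>n. TM n)"
  proof
    show "T_map \<theta> ` (\<Union>n. TM n) \<subseteq> (\<Union>n. TM n)" by (auto simp: TM_def T_map_def)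
  next
    show "(\<Union>n. TM n) \<subseteq> T_map \<theta> ` (\<Union>n. TM n)"
    proof
      fix ys :: "'b list" assume "ys \<in> (\<Union>n. TM n)"
      then obtain n where "ys \<in> TM n" by blast
      moreover have "T_map \<theta> (map (inv \<theta>) ys) = ys"
        using s by (simp add: T_map_def surj_f_inv_f map_idI)
      ultimately show "ys \<in> T_map \<theta> ` (\<Union>n. TM n)"
        by (metis (no_types, lifting) TM_iff UN_I UNIV_I image_eqI length_map)
    qed
  qed
qed

end
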